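(* Let $G_i=(V_i,E_i)$ be a graph, $i\in\{1,2\}$, let $\delta_2$ be the minimum degree of $G_2$, let $S_1\subseteq V_1$ and let $k$ be an integer. If $S_1\times V_2$ is a $k$-daf set in $G_1\times G_2$, then $S_1$ is a $(k-\delta_2)$-daf set in $G_1$.
   Context: All graphs are finite and simple (with non-empty vertex sets). For a graph $G=(V,E)$, a set $S\subseteq V$ and $v\in V$, let $\delta_S(v)=|\{u\in S: uv\in E\}|$ and $\overline{S}=V\setminus S$. For an integer $k$, a non-empty set $S\subseteq V$ is a defensive $k$-alliance if $\delta_S(v)\ge \delta_{\overline S}(v)+k$ for every $v\in S$. A set $X\subseteq V$ is a defensive $k$-alliance free set ($k$-daf set) if no defensive $k$-alliance $S$ satisfies $S\subseteq X$. The Cartesian product $G_1\times G_2$ of $G_1=(V_1,E_1)$, $G_2=(V_2,E_2)$ has vertex set $V_1\times V_2$, with $(a,b)$ adjacent to $(c,d)$ iff either $a=c$ and $bd\in E_2$, or $b=d$ and $ac\in E_1$. *)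

theory Defs
  imports Main
begin

definition graph :: "'a set \<Rightarrow> ('a \<Rightarrow> 'a \<Rightarrow> bool) \<Rightarrow> bool" where
  "graph V E \<longleftrightarrow> finite V \<and> V \<noteq> {} \<and>
     (\<forall>u v. E u v \<longrightarrow> u \<in> V \<and> v \<in> V) \<and>
     (\<forall>u v. E u v \<longrightarrow> E v u) \<and> (\<forall>v. \<not> E v v)"

definition deg_in :: "('a \<Rightarrow> 'a \<Rightarrow> bool) \<Rightarrow> 'a set \<Rightarrow> 'a \<Rightarrow> nat" where
  "deg_in E S v = card {u \<in> S. E u v}"

definition min_degree :: "'a set \<Rightarrow> ('a \<Rightarrow> 'a \<Rightarrow> bool) \<Rightarrow> nat" where
  "min_degree V E = Min ((\<lambda>v. deg_in E V v) ` V)"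

definition defensive_alliance :: "'a set \<Rightarrow> ('a \<Rightarrow> 'a \<Rightarrow> bool) \<Rightarrow> int \<Rightarrow> 'a set \<Rightarrow> bool" where
  "defensive_alliance V E k S \<longleftrightarrow> S \<noteq> {} \<and> S \<subseteq> V \<and>
     (\<forall>v\<in>S. int (deg_in E S v) \<ge> int (deg_in E (V - S) v) + k)"

definition daf_set :: "'a set \<Rightarrow> ('a \<Rightarrow> 'a \<Rightarrow> bool) \<Rightarrow> int \<Rightarrow> 'a set \<Rightarrow> bool" where
  "daf_set V E k X \<longleftrightarrow> X \<subseteq> V \<and> (\<forall>S. S \<subseteq> X \<longrightarrow> \<not> defensive_alliance V E k S)"

definition cart_edge :: "('a \<Rightarrow> 'a \<Rightarrow> bool) \<Rightarrow> ('b \<Rightarrow> 'b \<Rightarrow> bool) \<Rightarrow> 'a \<times> 'b \<Rightarrow> 'a \<times> 'b \<Rightarrow> bool" where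
  "cart_edge E1 E2 p q \<longleftrightarrow>
     (fst p = fst q \<and> E2 (snd p) (snd q)) \<or> (snd p = snd q \<and> E1 (fst p) (fst q))"

end

theory Submission
  imports Defs
begin

theorem corollary2:
  fixes V1 :: "'a set" and E1 :: "'a \<Rightarrow> 'a \<Rightarrow> bool"
    and V2 :: "'b set" and E2 :: "'b \<Rightarrow> 'b \<Rightarrow> bool"
    and S1 :: "'a set" and k :: int
  assumes "graph V1 E1" and "graph V2 E2" and "S1 \<subseteq> V1"
    and "daf_set (V1 \<times> V2) (cart_edge E1 E2) k (S1 \<times> V2)"
  shows "daf_set V1 E1 (k - int (min_degree V2 E2)) S1"
  unfolding daf_set_def
proof (intro conjI allI impI)
  show "S1 \<subseteq> V1" by fact
  fix S assume SS: "S \<subseteq> S1"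
  show "\<not> defensive_alliance V1 E1 (k - int (min_degree V2 E2)) S"
  proof
    assume da: "defensive_alliance V1 E1 (k - int (min_degree V2 E2)) S"
    have g1: "finite V1" "\<forall>v. \<not> E1 v v" "\<forall>u v. E1 u v \<longrightarrow> u \<in> V1 \<and> v \<in> V1"
      using assms(1) unfolding graph_def by auto
    have g2: "finite V2" "V2 \<noteq> {}" "\<forall>u v. E2 u v \<longrightarrow> u \<in> V2 \<and> v \<in> V2"
      using assms(2) unfolding graph_def by auto
    have SV: "S \<noteq> {}" "S \<subseteq> V1" using da unfolding defensive_alliance_def by auto
    have fS: "finite S" using SV g1 finite_subset by blast
    have "defensive_alliance (V1 \<times> V2) (cart_edge E1 E2) k (S \<times> V2)"
      unfolding defensive_alliance_def
    proof (intro conjI ballI)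
      show "S \<times> V2 \<noteq> {}" using SV g2 by auto
      show "S \<times> V2 \<subseteq> V1 \<times> V2" using SV by auto
      fix p assume p: "p \<in> S \<times> V2"
      obtain a b where ab: "p = (a,b)" "a \<in> S" "b \<in> V2" using p by auto
      have ineq: "int (deg_in E1 S a) \<ge> int (deg_in E1 (V1 - S) a) + (k - int (min_degree V2 E2))"
        using da ab unfolding defensive_alliance_def by auto
      have md: "min_degree V2 E2 \<le> deg_in E2 V2 b"
        unfolding min_degree_def using g2 ab by (intro Min_le) auto
      have e1: "{u \<in> S \<times> V2. cart_edge E1 E2 u p} =
          ({x\<in>S. E1 x a} \<times> {b}) \<union> ({a} \<times> {y\<in>V2. E2 y b})"
        using ab g1 unfolding cart_edge_def by auto
      have disj: "({x\<in>S. E1 x a} \<times> {b}) \<inter> ({a} \<times> {y\<in>V2. E2 y b}) = {}"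
        using g1 by auto
      have c1: "deg_in (cart_edge E1 E2) (S \<times> V2) p = deg_in E1 S a + deg_in E2 V2 b"
        unfolding deg_in_def e1
        apply (subst card_Un_disjoint)
        using fS g2 disj by (auto simp: card_cartesian_product)
      have e2: "{u \<in> V1 \<times> V2 - S \<times> V2. cart_edge E1 E2 u p} = {x\<in>V1 - S. E1 x a} \<times> {b}"
        using ab g1 g2 unfolding cart_edge_def by auto
      have c2: "deg_in (cart_edge E1 E2) (V1 \<times> V2 - S \<times> V2) p = deg_in E1 (V1 - S) a"
        unfolding deg_in_def e2 by (simp add: card_cartesian_product)
      show "int (deg_in (cart_edge E1 E2) (S \<times> V2) p)
          \<ge> int (deg_in (cart_edge E1 E2) (V1 \<times> V2 - S \<times> V2) p) + k"
        using c1 c2 ineq md by linarith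
    qed
    moreover have "S \<times> V2 \<subseteq> S1 \<times> V2" using SS by auto
    ultimately show False using assms(4) unfolding daf_set_def by blast
  qed
qed

end
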